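(* The image $\operatorname{Im}\sharp$ is contained in the even subalgebra $U(\mathfrak{sl}_2)_e$ and is a proper subalgebra of it; that is, $\operatorname{Im}\sharp\neq U(\mathfrak{sl}_2)_e$ and $\operatorname{Im}\sharp\neq\mathbb C\cdot 1$.
   Context: All algebras are unital associative over $\mathbb C$, $[x,y]=xy-yx$, $\mathbf i=\sqrt{-1}$. $U(\mathfrak{sl}_2)$ is generated by $E,F,H$ with $[H,E]=2E$, $[H,F]=-2F$, $[E,F]=H$. For $n\in\mathbb Z$ let $U_n$ be the span of all $E^iF^jH^k$ ($i,j,k\in\mathbb N$, $i-j=n$); this makes $U(\mathfrak{sl}_2)$ a $\mathbb Z$-graded algebra, and the even subalgebra is $U(\mathfrak{sl}_2)_e=\bigoplus_{n\in\mathbb Z}U_{2n}$. $\Re$ is generated by $A,B,C,\Delta$ with $[A,B]=[B,C]=[C,A]=2\Delta$ and such that $[A,\Delta]+AC-BA$, $[B,\Delta]+BA-CB$, $[C,\Delta]+CB-AC$ are central. $\sharp:\Re\to U(\mathfrak{sl}_2)$ is the unique algebra homomorphism with $A\mapsto \frac{(E+F-2)(E+F+2)}{16}$, $B\mapsto\frac{(H-2)(H+2)}{16}$, $C\mapsto\frac{(\mathbf iE-\mathbf iF-2)(\mathbf iE-\mathbf iF+2)}{16}$, $\Delta\mapsto\frac{(H+2)F^2-(H-2)E^2}{64}$. A subalgebra is proper if it is neither the whole algebra nor the subalgebra generated by the unit. *)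

theory Defs
  imports Complex_Main "HOL-Library.Poly_Mapping"
begin

datatype gen = GE | GF | GH

datatype fword = FW "gen list"

fun fw_list :: "fword \<Rightarrow> gen list" where "fw_list (FW w) = w"

instantiation fword :: monoid_add
begin
definition zero_fword :: fword where "zero_fword = FW []"
definition plus_fword :: "fword \<Rightarrow> fword \<Rightarrow> fword" where
  "plus_fword u v = FW (fw_list u @ fw_list v)"
instance
proof
  fix a b c :: fword
  show "a + b + c = a + (b + c)"
    by (cases a; cases b; cases c) (simp add: plus_fword_def)
  show "0 + a = a" by (cases a) (simp add: plus_fword_def zero_fword_def)
  show "a + 0 = a" by (cases a) (simp add: plus_fword_def zero_fword_def)
qed
end

text \<open>Free algebra \<open>\<complex>\<langle>E,F,H\<rangle>\<close>: finitely supported complex functions on words,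
  with convolution product (a ring_1 by the Poly_Mapping library).\<close>
type_synonym FA = "fword \<Rightarrow>\<^sub>0 complex"

definition sc :: "complex \<Rightarrow> FA" where "sc c = Poly_Mapping.single 0 c"

definition gE :: FA where "gE = Poly_Mapping.single (FW [GE]) 1"
definition gF :: FA where "gF = Poly_Mapping.single (FW [GF]) 1"
definition gH :: FA where "gH = Poly_Mapping.single (FW [GH]) 1"

inductive_set ideal_gen :: "'a::ring_1 set \<Rightarrow> 'a set" for R where
  gen: "r \<in> R \<Longrightarrow> r \<in> ideal_gen R"
| zero: "0 \<in> ideal_gen R"
| add: "x \<in> ideal_gen R \<Longrightarrow> y \<in> ideal_gen R \<Longrightarrow> x + y \<in> ideal_gen R"
| mult: "x \<in> ideal_gen R \<Longrightarrow> a * x * b \<in> ideal_gen R"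

definition sl2_rels :: "FA set" where
  "sl2_rels = {gH * gE - gE * gH - 2 * gE, gH * gF - gF * gH + 2 * gF, gE * gF - gF * gE - gH}"

definition sl2_ideal :: "FA set" where "sl2_ideal = ideal_gen sl2_rels"

text \<open>Elements of U(sl_2) are the cosets \<open>x + I\<close>.\<close>
definition cls :: "FA \<Rightarrow> FA set" where "cls x = {y. x - y \<in> sl2_ideal}"

inductive_set subalg_gen :: "FA set \<Rightarrow> FA set" for S where
  gen: "s \<in> S \<Longrightarrow> s \<in> subalg_gen S"
| scal: "sc c \<in> subalg_gen S"
| add: "x \<in> subalg_gen S \<Longrightarrow> y \<in> subalg_gen S \<Longrightarrow> x + y \<in> subalg_gen S"
| mult: "x \<in> subalg_gen S \<Longrightarrow> y \<in> subalg_gen S \<Longrightarrow> x * y \<in> subalg_gen S"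

text \<open>Lift of \<open>U_n\<close>: the complex span of \<open>E^i F^j H^k\<close> with \<open>i - j = n\<close>.\<close>
inductive_set grade_lift :: "int \<Rightarrow> FA set" for n where
  zero: "0 \<in> grade_lift n"
| mono: "int i - int j = n \<Longrightarrow> x \<in> grade_lift n \<Longrightarrow>
           sc c * gE ^ i * gF ^ j * gH ^ k + x \<in> grade_lift n"

text \<open>Lift of the even subalgebra \<open>\<Oplus>_n U_{2n}\<close>.\<close>
inductive_set even_lift :: "FA set" where
  zero: "0 \<in> even_lift"
| add: "x \<in> grade_lift (2 * n) \<Longrightarrow> y \<in> even_lift \<Longrightarrow> x + y \<in> even_lift"

definition U_even :: "FA set set" where "U_even = cls ` even_lift"

definition U_scalars :: "FA set set" where "U_scalars = cls ` range sc"

definition sharpA :: FA where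
  "sharpA = sc (1/16) * (gE + gF - 2) * (gE + gF + 2)"
definition sharpB :: FA where
  "sharpB = sc (1/16) * (gH - 2) * (gH + 2)"
definition sharpC :: FA where
  "sharpC = sc (1/16) * (sc \<i> * gE - sc \<i> * gF - 2) * (sc \<i> * gE - sc \<i> * gF + 2)"
definition sharpD :: FA where
  "sharpD = sc (1/64) * ((gH + 2) * gF ^ 2 - (gH - 2) * gE ^ 2)"

definition Im_sharp :: "FA set set" where
  "Im_sharp = cls ` subalg_gen {sharpA, sharpB, sharpC, sharpD}"

end

theory Submission
  imports Defs "HOL-Library.Function_Algebras"
begin


lemma I_zero: "0 \<in> sl2_ideal" by (simp add: sl2_ideal_def ideal_gen.zero)
lemma I_add: "x \<in> sl2_ideal \<Longrightarrow> y \<in> sl2_ideal \<Longrightarrow> x + y \<in> sl2_ideal"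
  by (simp add: sl2_ideal_def ideal_gen.add)
lemma I_mult: "x \<in> sl2_ideal \<Longrightarrow> a * x * b \<in> sl2_ideal"
  by (simp add: sl2_ideal_def ideal_gen.mult)
lemma I_gen: "r \<in> sl2_rels \<Longrightarrow> r \<in> sl2_ideal"
  by (simp add: sl2_ideal_def ideal_gen.gen)
lemma I_left: "x \<in> sl2_ideal \<Longrightarrow> a * x \<in> sl2_ideal"
  using I_mult[of x a 1] by simp
lemma I_right: "x \<in> sl2_ideal \<Longrightarrow> x * b \<in> sl2_ideal"
  using I_mult[of x 1 b] by simp
lemma I_neg: "x \<in> sl2_ideal \<Longrightarrow> - x \<in> sl2_ideal"
  using I_left[of x "-1"] by simp
lemma I_diff: "x \<in> sl2_ideal \<Longrightarrow> y \<in> sl2_ideal \<Longrightarrow> x - y \<in> sl2_ideal"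
  using I_add[OF _ I_neg] by (metis diff_conv_add_uminus)

definition cg :: "FA \<Rightarrow> FA \<Rightarrow> bool" (infix "\<approx>" 50) where
  "x \<approx> y \<longleftrightarrow> x - y \<in> sl2_ideal"

lemma cg_refl[simp]: "x \<approx> x" by (simp add: cg_def I_zero)
lemma cg_sym: "x \<approx> y \<Longrightarrow> y \<approx> x"
  unfolding cg_def using I_neg by fastforce
lemma cg_trans[trans]: "x \<approx> y \<Longrightarrow> y \<approx> z \<Longrightarrow> x \<approx> z"
  unfolding cg_def using I_add by fastforce
lemma cg_add: "x \<approx> x' \<Longrightarrow> y \<approx> y' \<Longrightarrow> x + y \<approx> x' + y'"
proof -
  assume a: "x \<approx> x'" "y \<approx> y'"
  have e: "x + y - (x' + y') = (x - x') + (y - y')" by (simp add: algebra_simps)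
  show ?thesis using a unfolding cg_def e by (metis I_add)
qed
lemma cg_diff: "x \<approx> x' \<Longrightarrow> y \<approx> y' \<Longrightarrow> x - y \<approx> x' - y'"
proof -
  assume a: "x \<approx> x'" "y \<approx> y'"
  have e: "x - y - (x' - y') = (x - x') - (y - y')" by (simp add: algebra_simps)
  show ?thesis using a unfolding cg_def e by (metis I_diff)
qed
lemma cg_lmult: "x \<approx> y \<Longrightarrow> a * x \<approx> a * y"
  unfolding cg_def using I_left by (metis right_diff_distrib)
lemma cg_rmult: "x \<approx> y \<Longrightarrow> x * b \<approx> y * b"
  unfolding cg_def using I_right by (metis left_diff_distrib)
lemma cg_mult: "x \<approx> x' \<Longrightarrow> y \<approx> y' \<Longrightarrow> x * y \<approx> x' * y'"
  using cg_lmult cg_rmult cg_trans by blast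

lemma cls_eq: "x \<approx> y \<Longrightarrow> cls x = cls y"
  unfolding cls_def using cg_trans cg_sym unfolding cg_def[symmetric] by blast
lemma cls_eqD: "cls x = cls y \<Longrightarrow> x \<approx> y"
proof -
  assume "cls x = cls y"
  moreover have "y \<in> cls y" by (simp add: cls_def I_zero)
  ultimately have "y \<in> cls x" by simp
  thus ?thesis by (simp add: cls_def cg_def)
qed

lemma R1: "gH * gE \<approx> gE * gH + 2 * gE"
  using I_gen[of "gH * gE - gE * gH - 2 * gE"] by (simp add: sl2_rels_def cg_def diff_diff_eq)
lemma R2: "gH * gF \<approx> gF * gH - 2 * gF"
  using I_gen[of "gH * gF - gF * gH + 2 * gF"] by (simp add: sl2_rels_def cg_def algebra_simps)
lemma R3: "gF * gE \<approx> gE * gF - gH"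
proof -
  have "gE * gF - gF * gE - gH \<in> sl2_ideal" by (rule I_gen) (simp add: sl2_rels_def)
  hence "gE * gF - gH \<approx> gF * gE" by (simp add: cg_def algebra_simps)
  thus ?thesis by (rule cg_sym)
qed

lemma sc_add: "sc (a + b) = sc a + sc b" by (simp add: sc_def single_add)
lemma sc_mult: "sc (a * b) = sc a * sc b" by (simp add: sc_def mult_single)
lemma sc_one[simp]: "sc 1 = 1" by (simp add: sc_def zero_fword_def[symmetric])
lemma sc_zero[simp]: "sc 0 = 0" by (simp add: sc_def)
lemma sc_uminus: "sc (- a) = - sc a" by (simp add: sc_def single_uminus)
lemma sc_of_nat: "sc (of_nat n) = of_nat n" by (simp add: sc_def)
lemma sc_numeral: "sc (numeral n) = numeral n" by (simp add: sc_def)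

lemma pm_induct[case_names zero add]:
  fixes f :: "'a \<Rightarrow>\<^sub>0 'b::monoid_add"
  assumes "P 0" "\<And>f a b. P f \<Longrightarrow> P (f + Poly_Mapping.single a b)"
  shows "P f"
proof (induction f rule: update_induct)
  case const then show ?case using assms(1) .
next
  case (update g k v)
  have "Poly_Mapping.update k v g = g + Poly_Mapping.single k v"
    using update(1) by (intro poly_mapping_eqI) (auto simp: lookup_update lookup_add lookup_single in_keys_iff when_def)
  then show ?case using assms(2) update(3) by simp
qed

lemma sc_central: "sc c * x = x * sc c"
proof (induction x rule: pm_induct)
  case zero then show ?case by simp
next
  case (add f a b)
  have "sc c * Poly_Mapping.single a b = Poly_Mapping.single a b * sc c"
    by (simp add: sc_def mult_single mult.commute)
  then show ?case by (simp add: algebra_simps add)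
qed

lemma numeral_comm: "numeral n * x = x * (numeral n :: 'a::ring_1)"
  by (metis of_nat_numeral mult_of_nat_commute)
lemma num_lc: "x * (numeral n * y) = numeral n * (x * (y::'a::ring_1))"
  by (metis mult.assoc of_nat_numeral mult_of_nat_commute)
lemma ofn_lc: "x * (of_nat n * y) = of_nat n * (x * (y::'a::ring_1))"
  by (metis mult.assoc mult_of_nat_commute)
lemma pow_lc: "a ^ n * (a * x) = a * (a ^ n * (x::'a::monoid_mult))"
  by (metis mult.assoc power_commutes)
lemma gens_lc:
  "gE * (of_nat n * y) = of_nat n * (gE * y)" "gF * (of_nat n * y) = of_nat n * (gF * y)"
  "gH * (of_nat n * y) = of_nat n * (gH * y)"
  "gE ^ k * (of_nat n * y) = of_nat n * (gE ^ k * y)" "gF ^ k * (of_nat n * y) = of_nat n * (gF ^ k * y)"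
  "gH ^ k * (of_nat n * y) = of_nat n * (gH ^ k * y)"
  "gE * (numeral m * y) = numeral m * (gE * y)" "gF * (numeral m * y) = numeral m * (gF * y)"
  "gH * (numeral m * y) = numeral m * (gH * y)"
  "gE ^ k * (numeral m * y) = numeral m * (gE ^ k * y)" "gF ^ k * (numeral m * y) = numeral m * (gF ^ k * y)"
  "gH ^ k * (numeral m * y) = numeral m * (gH ^ k * y)"
  by (simp_all only: ofn_lc num_lc)
lemmas ns = distrib_left distrib_right left_diff_distrib right_diff_distrib mult.assoc gens_lc
  power_commutes pow_lc mult_2

lemma L1: "gH * gE ^ i \<approx> gE ^ i * gH + of_nat (2 * i) * gE ^ i"
proof (induction i)
  case 0 then show ?case by simp
next
  case (Suc i)
  have "gH * gE ^ Suc i = (gH * gE ^ i) * gE" by (simp only: power_Suc2 mult.assoc)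
  also have "\<dots> \<approx> (gE ^ i * gH + of_nat (2 * i) * gE ^ i) * gE" by (rule cg_rmult[OF Suc])
  also have "\<dots> = gE ^ i * (gH * gE) + of_nat (2 * i) * gE ^ Suc i"
    by (simp add: ns)
  also have "\<dots> \<approx> gE ^ i * (gE * gH + 2 * gE) + of_nat (2 * i) * gE ^ Suc i"
    by (intro cg_add cg_lmult R1 cg_refl)
  also have "\<dots> = gE ^ Suc i * gH + of_nat (2 * Suc i) * gE ^ Suc i"
    by (simp add: ns)
  finally show ?case .
qed

lemma L2: "gH * gF ^ j \<approx> gF ^ j * gH - of_nat (2 * j) * gF ^ j"
proof (induction j)
  case 0 then show ?case by simp
next
  case (Suc j)
  have "gH * gF ^ Suc j = (gH * gF ^ j) * gF" by (simp only: power_Suc2 mult.assoc)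
  also have "\<dots> \<approx> (gF ^ j * gH - of_nat (2 * j) * gF ^ j) * gF" by (rule cg_rmult[OF Suc])
  also have "\<dots> = gF ^ j * (gH * gF) - of_nat (2 * j) * gF ^ Suc j"
    by (simp add: ns)
  also have "\<dots> \<approx> gF ^ j * (gF * gH - 2 * gF) - of_nat (2 * j) * gF ^ Suc j"
    by (intro cg_diff cg_lmult R2 cg_refl)
  also have "\<dots> = gF ^ Suc j * gH - of_nat (2 * Suc j) * gF ^ Suc j"
    by (simp add: ns)
  finally show ?case .
qed

lemma L3: "gF * gE ^ Suc i \<approx> gE ^ Suc i * gF - of_nat (Suc i) * gE ^ i * gH - of_nat (Suc i * i) * gE ^ i"
proof (induction i)
  case 0 then show ?case using R3 by simp
next
  case (Suc i)
  have "gF * gE ^ Suc (Suc i) = (gF * gE ^ Suc i) * gE" by (simp only: power_Suc2 mult.assoc)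
  also have "\<dots> \<approx> (gE ^ Suc i * gF - of_nat (Suc i) * gE ^ i * gH - of_nat (Suc i * i) * gE ^ i) * gE"
    by (rule cg_rmult[OF Suc])
  also have "\<dots> = gE ^ Suc i * (gF * gE) - of_nat (Suc i) * gE ^ i * (gH * gE) - of_nat (Suc i * i) * gE ^ Suc i"
    by (simp add: ns)
  also have "\<dots> \<approx> gE ^ Suc i * (gE * gF - gH) - of_nat (Suc i) * gE ^ i * (gE * gH + 2 * gE) - of_nat (Suc i * i) * gE ^ Suc i"
    by (intro cg_add cg_diff cg_lmult R1 R3 cg_refl)
  also have "\<dots> = gE ^ Suc (Suc i) * gF - of_nat (Suc (Suc i)) * gE ^ Suc i * gH - of_nat (Suc (Suc i) * Suc i) * gE ^ Suc i"
    by (simp add: ns)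
  finally show ?case .
qed



lemma sc_lcomm: "a * (sc c * x) = sc c * (a * x)"
  by (metis mult.assoc sc_central)

definition wd :: "nat \<Rightarrow> nat \<Rightarrow> nat \<Rightarrow> FA" where "wd i j k = gE ^ i * gF ^ j * gH ^ k"

lemma gl_add: "x \<in> grade_lift n \<Longrightarrow> y \<in> grade_lift n \<Longrightarrow> x + y \<in> grade_lift n"
  by (induction x rule: grade_lift.induct) (auto simp: add.assoc intro: grade_lift.mono)

definition W :: "int \<Rightarrow> FA set" where "W n = {x. \<exists>y\<in>grade_lift n. x \<approx> y}"

lemma W_zero: "0 \<in> W n" unfolding W_def using grade_lift.zero cg_refl by blast
lemma W_add: "x \<in> W n \<Longrightarrow> y \<in> W n \<Longrightarrow> x + y \<in> W n"
  unfolding W_def using gl_add cg_add by blast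
lemma W_cong: "x \<approx> x' \<Longrightarrow> x' \<in> W n \<Longrightarrow> x \<in> W n"
  unfolding W_def using cg_trans by blast
lemma W_mon: "int i - int j = n \<Longrightarrow> sc c * gE ^ i * gF ^ j * gH ^ k \<in> W n"
proof -
  assume h: "int i - int j = n"
  have "sc c * gE ^ i * gF ^ j * gH ^ k + 0 \<in> grade_lift n"
    by (rule grade_lift.mono[OF h grade_lift.zero])
  then show ?thesis unfolding W_def using cg_refl by force
qed

lemma gl_sc: "y \<in> grade_lift n \<Longrightarrow> sc c * y \<in> grade_lift n"
proof (induction y rule: grade_lift.induct)
  case zero then show ?case by (simp add: grade_lift.zero)
next
  case (mono i j x c' k)
  have "sc c * (sc c' * gE ^ i * gF ^ j * gH ^ k + x) = sc (c * c') * gE ^ i * gF ^ j * gH ^ k + sc c * x"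
    by (simp add: sc_mult mult.assoc distrib_left)
  then show ?case using mono by (simp add: grade_lift.mono)
qed

lemma W_sc: "x \<in> W n \<Longrightarrow> sc c * x \<in> W n"
  unfolding W_def using gl_sc cg_lmult by blast
lemma W_neg: "x \<in> W n \<Longrightarrow> - x \<in> W n"
  using W_sc[of x n "-1"] by (simp add: sc_uminus)
lemma W_diff: "x \<in> W n \<Longrightarrow> y \<in> W n \<Longrightarrow> x - y \<in> W n"
  using W_add[OF _ W_neg] by (metis diff_conv_add_uminus)
lemma W_ofnat: "x \<in> W n \<Longrightarrow> of_nat m * x \<in> W n"
  using W_sc[of x n "of_nat m"] by (simp add: sc_of_nat)
lemma W_wd: "int i - int j = n \<Longrightarrow> wd i j k \<in> W n"
  using W_mon[of i j n 1 k] by (simp add: wd_def)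
lemma W_scal: "sc c \<in> W 0"
  using W_mon[of 0 0 0 c 0] by simp
lemma W_one: "1 \<in> W 0"
  using W_scal[of 1] by simp
lemma W_num: "numeral m \<in> W 0"
  using W_scal[of "numeral m"] by (simp add: sc_numeral)

lemma W_left:
  assumes "\<And>i j k. int i - int j = n \<Longrightarrow> a * wd i j k \<in> W m"
  shows "x \<in> W n \<Longrightarrow> a * x \<in> W m"
proof -
  assume "x \<in> W n"
  then obtain y where y: "y \<in> grade_lift n" "x \<approx> y" unfolding W_def by blast
  from y(1) have "a * y \<in> W m"
  proof (induction y rule: grade_lift.induct)
    case zero then show ?case by (simp add: W_zero)
  next
    case (mono i j x c k)
    have "a * (sc c * gE ^ i * gF ^ j * gH ^ k + x) = sc c * (a * wd i j k) + a * x"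
      by (simp add: wd_def distrib_left mult.assoc sc_lcomm)
    then show ?case using mono assms by (simp add: W_add W_sc)
  qed
  then show ?thesis using cg_lmult[OF y(2)] W_cong by blast
qed

lemma W_E: "x \<in> W n \<Longrightarrow> gE * x \<in> W (n + 1)"
proof (rule W_left)
  fix i j k assume "int i - int j = n"
  have "gE * wd i j k = wd (Suc i) j k" by (simp add: wd_def mult.assoc)
  then show "gE * wd i j k \<in> W (n + 1)" using W_wd[of "Suc i" j "n+1" k] \<open>int i - int j = n\<close> by simp
qed

lemma W_H: "x \<in> W n \<Longrightarrow> gH * x \<in> W n"
proof (rule W_left)
  fix i j k assume ij: "int i - int j = n"
  have "gH * wd i j k = (gH * gE ^ i) * gF ^ j * gH ^ k" by (simp add: wd_def mult.assoc)
  also have "\<dots> \<approx> (gE ^ i * gH + of_nat (2 * i) * gE ^ i) * gF ^ j * gH ^ k"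
    by (intro cg_rmult L1)
  also have "\<dots> = gE ^ i * (gH * gF ^ j) * gH ^ k + of_nat (2 * i) * wd i j k"
    by (simp add: wd_def ns)
  also have "\<dots> \<approx> gE ^ i * (gF ^ j * gH - of_nat (2 * j) * gF ^ j) * gH ^ k + of_nat (2 * i) * wd i j k"
    by (intro cg_add cg_rmult cg_lmult L2 cg_refl)
  also have "\<dots> = wd i j (Suc k) - of_nat (2 * j) * wd i j k + of_nat (2 * i) * wd i j k"
    by (simp add: wd_def ns)
  finally have c: "gH * wd i j k \<approx> \<dots>" .
  have "wd i j (Suc k) - of_nat (2 * j) * wd i j k + of_nat (2 * i) * wd i j k \<in> W n"
    using ij by (intro W_add W_diff W_ofnat W_wd)
  with c show "gH * wd i j k \<in> W n" using W_cong by blast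
qed

lemma W_F: "x \<in> W n \<Longrightarrow> gF * x \<in> W (n - 1)"
proof (rule W_left)
  fix i j k assume ij: "int i - int j = n"
  show "gF * wd i j k \<in> W (n - 1)"
  proof (cases i)
    case 0
    have "gF * wd i j k = wd 0 (Suc j) k" using 0 by (simp add: wd_def mult.assoc)
    then show ?thesis using W_wd[of 0 "Suc j" "n - 1" k] ij 0 by simp
  next
    case (Suc i')
    have "gF * wd i j k = (gF * gE ^ Suc i') * gF ^ j * gH ^ k" using Suc by (simp add: wd_def mult.assoc)
    also have "\<dots> \<approx> (gE ^ Suc i' * gF - of_nat (Suc i') * gE ^ i' * gH - of_nat (Suc i' * i') * gE ^ i') * gF ^ j * gH ^ k"
      by (intro cg_rmult L3)
    also have "\<dots> = wd (Suc i') (Suc j) k - of_nat (Suc i') * (gE ^ i' * (gH * gF ^ j) * gH ^ k) - of_nat (Suc i' * i') * wd i' j k"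
      by (simp add: wd_def ns)
    also have "\<dots> \<approx> wd (Suc i') (Suc j) k - of_nat (Suc i') * (gE ^ i' * (gF ^ j * gH - of_nat (2 * j) * gF ^ j) * gH ^ k) - of_nat (Suc i' * i') * wd i' j k"
      by (intro cg_add cg_diff cg_rmult cg_lmult L2 cg_refl)
    also have "\<dots> = wd (Suc i') (Suc j) k - of_nat (Suc i') * wd i' j (Suc k) + of_nat (Suc i') * (of_nat (2 * j) * wd i' j k) - of_nat (Suc i' * i') * wd i' j k"
      by (simp add: wd_def ns)
    finally have c: "gF * wd i j k \<approx> \<dots>" .
    have "wd (Suc i') (Suc j) k - of_nat (Suc i') * wd i' j (Suc k) + of_nat (Suc i') * (of_nat (2 * j) * wd i' j k) - of_nat (Suc i' * i') * wd i' j k \<in> W (n - 1)"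
      using ij Suc by (intro W_add W_diff W_ofnat W_wd) auto
    with c show ?thesis using W_cong by blast
  qed
qed

lemma W_Hpow: "x \<in> W n \<Longrightarrow> gH ^ k * x \<in> W n"
  by (induction k) (simp_all add: mult.assoc W_H)
lemma W_Fpow: "x \<in> W n \<Longrightarrow> gF ^ k * x \<in> W (n - int k)"
proof (induction k)
  case 0 then show ?case by simp
next
  case (Suc k)
  then have "gF * (gF ^ k * x) \<in> W (n - int k - 1)" by (intro W_F)
  then show ?case by (simp add: mult.assoc algebra_simps)
qed
lemma W_Epow: "x \<in> W n \<Longrightarrow> gE ^ k * x \<in> W (n + int k)"
proof (induction k)
  case 0 then show ?case by simp
next
  case (Suc k)
  then have "gE * (gE ^ k * x) \<in> W (n + int k + 1)" by (intro W_E)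
  then show ?case by (simp add: mult.assoc algebra_simps)
qed

lemma W_mult: "x \<in> W a \<Longrightarrow> z \<in> W b \<Longrightarrow> x * z \<in> W (a + b)"
proof -
  assume "x \<in> W a" and z: "z \<in> W b"
  then obtain y where y: "y \<in> grade_lift a" "x \<approx> y" unfolding W_def by blast
  from y(1) have "y * z \<in> W (a + b)"
  proof (induction y rule: grade_lift.induct)
    case zero then show ?case by (simp add: W_zero)
  next
    case (mono i j x c k)
    have e: "(sc c * gE ^ i * gF ^ j * gH ^ k + x) * z = sc c * (gE ^ i * (gF ^ j * (gH ^ k * z))) + x * z"
      by (simp add: distrib_right mult.assoc)
    have "gE ^ i * (gF ^ j * (gH ^ k * z)) \<in> W (b - int j + int i)"
      using z by (intro W_Epow W_Fpow W_Hpow)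
    moreover have "b - int j + int i = a + b" using mono(1) by simp
    ultimately show ?case unfolding e using mono by (simp add: W_add W_sc)
  qed
  then show ?thesis using cg_rmult[OF y(2)] W_cong by blast
qed

lemma W_gE: "gE \<in> W 1" using W_E[OF W_one] by simp
lemma W_gF: "gF \<in> W (-1)" using W_F[OF W_one] by simp
lemma W_gH: "gH \<in> W 0" using W_H[OF W_one] by simp

lemma el_add: "x \<in> even_lift \<Longrightarrow> y \<in> even_lift \<Longrightarrow> x + y \<in> even_lift"
  by (induction x rule: even_lift.induct) (auto simp: add.assoc intro: even_lift.add)

definition Ev :: "FA set" where "Ev = {x. \<exists>y\<in>even_lift. x \<approx> y}"

lemma Ev_cong: "x \<approx> x' \<Longrightarrow> x' \<in> Ev \<Longrightarrow> x \<in> Ev"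
  unfolding Ev_def using cg_trans by blast
lemma Ev_add: "x \<in> Ev \<Longrightarrow> y \<in> Ev \<Longrightarrow> x + y \<in> Ev"
  unfolding Ev_def using el_add cg_add by blast
lemma Ev_W: "x \<in> W d \<Longrightarrow> even d \<Longrightarrow> x \<in> Ev"
proof -
  assume "x \<in> W d" "even d"
  then obtain n y where "d = 2 * n" "y \<in> grade_lift (2 * n)" "x \<approx> y"
    unfolding W_def by (auto elim: evenE)
  then have "y + 0 \<in> even_lift" by (intro even_lift.add even_lift.zero)
  then show ?thesis unfolding Ev_def using \<open>x \<approx> y\<close> by force
qed
lemma gl_W: "y \<in> grade_lift n \<Longrightarrow> y \<in> W n"
  unfolding W_def using cg_refl by blast

lemma el_mult: "y \<in> even_lift \<Longrightarrow> y' \<in> even_lift \<Longrightarrow> y * y' \<in> Ev"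
proof (induction y rule: even_lift.induct)
  case zero then show ?case using Ev_W[OF W_zero[of 0]] by simp
next
  case (add g n y1)
  have "g * y' \<in> Ev" using add(4)
  proof (induction y' rule: even_lift.induct)
    case zero then show ?case using Ev_W[OF W_zero[of 0]] by simp
  next
    case (add g' m y2)
    have "g * g' \<in> W (2 * n + 2 * m)" using gl_W[OF add.hyps(1)] gl_W[OF \<open>g \<in> grade_lift (2*n)\<close>]
      by (intro W_mult) auto
    then have "g * g' \<in> Ev" by (rule Ev_W) simp
    then show ?case using add by (simp add: distrib_left Ev_add)
  qed
  then show ?case using add by (simp add: distrib_right Ev_add)
qed

lemma Ev_mult: "x \<in> Ev \<Longrightarrow> z \<in> Ev \<Longrightarrow> x * z \<in> Ev"
proof -
  assume "x \<in> Ev" "z \<in> Ev"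
  then obtain y y' where "y \<in> even_lift" "x \<approx> y" "y' \<in> even_lift" "z \<approx> y'" unfolding Ev_def by blast
  then show ?thesis using el_mult cg_mult Ev_cong by blast
qed

lemma Ev_Wi: "x \<in> W d \<Longrightarrow> d = 2 * n \<Longrightarrow> x \<in> Ev"
  using Ev_W by auto

lemma sq_lemma: "(Y - 2) * (Y + 2) = Y * Y - (4 :: 'a::ring_1)"
proof -
  have c: "Y * 2 = 2 * Y" by (simp add: numeral_comm)
  show ?thesis by (simp add: distrib_left left_diff_distrib c)
qed

lemma sharp_even: "s \<in> {sharpA, sharpB, sharpC, sharpD} \<Longrightarrow> s \<in> Ev"
proof -
  have sc0: "sc c \<in> W 0" for c by (rule W_scal)
  have scEv: "sc c \<in> Ev" for c using Ev_Wi[OF sc0, of 0] by simp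
  have A: "sharpA \<in> Ev"
  proof -
    have "sharpA = sc (1/16) * (gE * gE + gE * gF + gF * gE + gF * gF - 4)"
      unfolding sharpA_def mult.assoc sq_lemma[of "gE + gF"] by (simp add: distrib_left distrib_right add_ac)
    moreover have "gE * gE + gE * gF + gF * gE + gF * gF - 4 \<in> Ev"
    proof -
      have "gE * gE \<in> Ev" using W_mult[OF W_gE W_gE] by (rule Ev_Wi) simp
      moreover have "gE * gF \<in> Ev" using W_mult[OF W_gE W_gF] by (rule Ev_Wi) simp
      moreover have "gF * gE \<in> Ev" using W_mult[OF W_gF W_gE] by (rule Ev_Wi) simp
      moreover have "gF * gF \<in> Ev" using W_mult[OF W_gF W_gF] by (rule Ev_Wi[where n="-1"]) simp
      moreover have "- 4 \<in> Ev" using W_neg[OF W_num] by (rule Ev_Wi) simp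
      ultimately show ?thesis using Ev_add by (metis diff_conv_add_uminus)
    qed
    ultimately show ?thesis by (metis Ev_mult scEv)
  qed
  have B: "sharpB \<in> Ev"
  proof -
    have "sc (1/16) * (gH - 2) * (gH + 2) \<in> W (0 + 0 + 0)"
      by (intro W_mult W_add W_diff sc0 W_gH W_num)
    then show ?thesis unfolding sharpB_def by (rule Ev_Wi[where n=0]) simp
  qed
  have C: "sharpC \<in> Ev"
  proof -
    let ?Y = "sc \<i> * gE - sc \<i> * gF"
    have "sharpC = sc (1/16) * (?Y * ?Y - 4)"
      unfolding sharpC_def mult.assoc sq_lemma[of ?Y, symmetric] by simp
    moreover have "?Y * ?Y - 4 \<in> Ev"
    proof -
      have e: "?Y * ?Y = sc \<i> * gE * (sc \<i> * gE) - sc \<i> * gE * (sc \<i> * gF) - sc \<i> * gF * (sc \<i> * gE) + sc \<i> * gF * (sc \<i> * gF)"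
        by (simp add: algebra_simps)
      have iE: "sc \<i> * gE \<in> W 1" by (intro W_sc W_gE)
      have iF: "sc \<i> * gF \<in> W (-1)" by (intro W_sc W_gF)
      have "sc \<i> * gE * (sc \<i> * gE) \<in> Ev" using W_mult[OF iE iE] by (rule Ev_Wi) simp
      moreover have "sc \<i> * gE * (sc \<i> * gF) \<in> Ev" using W_mult[OF iE iF] by (rule Ev_Wi) simp
      moreover have "sc \<i> * gF * (sc \<i> * gE) \<in> Ev" using W_mult[OF iF iE] by (rule Ev_Wi) simp
      moreover have "sc \<i> * gF * (sc \<i> * gF) \<in> Ev" using W_mult[OF iF iF] by (rule Ev_Wi[where n="-1"]) simp
      moreover have "- 4 \<in> Ev" using W_neg[OF W_num] by (rule Ev_Wi) simp
      moreover have "- 1 \<in> Ev" using W_neg[OF W_one] by (rule Ev_Wi) simp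
      ultimately show ?thesis unfolding e using Ev_add Ev_mult
        by (metis diff_conv_add_uminus mult_minus1)
    qed
    ultimately show ?thesis by (metis Ev_mult scEv)
  qed
  have D: "sharpD \<in> Ev"
  proof -
    have "(gH + 2) * (gF * gF) \<in> W (0 + (-1 + -1))" by (intro W_mult W_add W_gH W_num W_gF)
    then have "(gH + 2) * (gF * gF) \<in> Ev" by (rule Ev_Wi[where n="-1"]) simp
    then have "(gH + 2) * gF ^ 2 \<in> Ev" by (simp add: power2_eq_square)
    moreover have "(gH - 2) * (gE * gE) \<in> W (0 + (1 + 1))" by (intro W_mult W_diff W_gH W_num W_gE)
    then have "(gH - 2) * (gE * gE) \<in> Ev" by (rule Ev_Wi[where n="1"]) simp
    then have "(gH - 2) * gE ^ 2 \<in> Ev" by (simp add: power2_eq_square)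
    moreover have "- 1 \<in> Ev" using W_neg[OF W_one] by (rule Ev_Wi) simp
    ultimately have "(gH + 2) * gF ^ 2 - (gH - 2) * gE ^ 2 \<in> Ev"
      using Ev_add Ev_mult by (metis diff_conv_add_uminus mult_minus1)
    then show ?thesis unfolding sharpD_def mult.assoc by (simp add: Ev_mult scEv)
  qed
  assume "s \<in> {sharpA, sharpB, sharpC, sharpD}"
  with A B C D show ?thesis by blast
qed

lemma subalg_even: "s \<in> subalg_gen {sharpA, sharpB, sharpC, sharpD} \<Longrightarrow> s \<in> Ev"
proof (induction s rule: subalg_gen.induct)
  case (gen s) then show ?case by (rule sharp_even)
next
  case (scal c) then show ?case using Ev_Wi[OF W_scal] by simp
next
  case (add x y) then show ?case by (simp add: Ev_add)
next
  case (mult x y) then show ?case by (simp add: Ev_mult)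
qed

lemma part1: "Im_sharp \<subseteq> U_even"
proof
  fix u assume "u \<in> Im_sharp"
  then obtain s where s: "s \<in> subalg_gen {sharpA, sharpB, sharpC, sharpD}" "u = cls s"
    unfolding Im_sharp_def by blast
  then obtain y where "y \<in> even_lift" "s \<approx> y" using subalg_even unfolding Ev_def by blast
  then show "u \<in> U_even" unfolding U_even_def s(2) using cls_eq by blast
qed



datatype idx = I1 | I2 | I3
type_synonym M3 = "idx \<Rightarrow> idx \<Rightarrow> complex"

lemma M3_eq: "(A::M3) = B \<longleftrightarrow>
  (A I1 I1 = B I1 I1 \<and> A I1 I2 = B I1 I2 \<and> A I1 I3 = B I1 I3 \<and>
   A I2 I1 = B I2 I1 \<and> A I2 I2 = B I2 I2 \<and> A I2 I3 = B I2 I3 \<and>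
   A I3 I1 = B I3 I1 \<and> A I3 I2 = B I3 I2 \<and> A I3 I3 = B I3 I3)"
proof
  assume h: "A I1 I1 = B I1 I1 \<and> A I1 I2 = B I1 I2 \<and> A I1 I3 = B I1 I3 \<and>
   A I2 I1 = B I2 I1 \<and> A I2 I2 = B I2 I2 \<and> A I2 I3 = B I2 I3 \<and>
   A I3 I1 = B I3 I1 \<and> A I3 I2 = B I3 I2 \<and> A I3 I3 = B I3 I3"
  show "A = B"
  proof (intro ext)
    fix i j show "A i j = B i j" using h by (cases i; cases j) auto
  qed
qed simp

definition mmul :: "M3 \<Rightarrow> M3 \<Rightarrow> M3" where
  "mmul A B = (\<lambda>i j. A i I1 * B I1 j + A i I2 * B I2 j + A i I3 * B I3 j)"
definition mid :: M3 where "mid = (\<lambda>i j. if i = j then 1 else 0)"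
definition msm :: "complex \<Rightarrow> M3 \<Rightarrow> M3" where "msm c A = (\<lambda>i j. c * A i j)"

lemma mmul_assoc: "mmul (mmul A B) C = mmul A (mmul B C)"
  by (simp add: M3_eq mmul_def algebra_simps)
lemma mmul_add_l: "mmul (A + B) C = mmul A C + mmul B C"
  by (simp add: M3_eq mmul_def algebra_simps)
lemma mmul_add_r: "mmul A (B + C) = mmul A B + mmul A C"
  by (simp add: M3_eq mmul_def algebra_simps)
lemma mmul_zero_l[simp]: "mmul 0 A = 0" by (simp add: M3_eq mmul_def)
lemma mmul_zero_r[simp]: "mmul A 0 = 0" by (simp add: M3_eq mmul_def)
lemma mid_l[simp]: "mmul mid A = A" by (simp add: M3_eq mmul_def mid_def)
lemma mid_r[simp]: "mmul A mid = A" by (simp add: M3_eq mmul_def mid_def)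
lemma msm_l: "mmul (msm c A) B = msm c (mmul A B)" by (simp add: M3_eq mmul_def msm_def algebra_simps)
lemma msm_r: "mmul A (msm c B) = msm c (mmul A B)" by (simp add: M3_eq mmul_def msm_def algebra_simps)
lemma msm_msm: "msm a (msm b A) = msm (a * b) A" by (simp add: M3_eq msm_def)
lemma msm_add: "msm (a + b) A = msm a A + msm b A" by (simp add: M3_eq msm_def algebra_simps)
lemma msm_0[simp]: "msm 0 A = 0" by (simp add: M3_eq msm_def)

definition E3 :: M3 where "E3 = (\<lambda>i j. if i = I1 \<and> j = I2 then 2 else if i = I2 \<and> j = I3 then 1 else 0)"
definition F3 :: M3 where "F3 = (\<lambda>i j. if i = I2 \<and> j = I1 then 1 else if i = I3 \<and> j = I2 then 2 else 0)"
definition H3 :: M3 where "H3 = (\<lambda>i j. if i = I1 \<and> j = I1 then 2 else if i = I3 \<and> j = I3 then -2 else 0)"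

fun gm :: "gen \<Rightarrow> M3" where "gm GE = E3" | "gm GF = F3" | "gm GH = H3"

definition wm :: "fword \<Rightarrow> M3" where "wm w = foldr (\<lambda>g M. mmul (gm g) M) (fw_list w) mid"

lemma foldr_mm: "foldr (\<lambda>g M. mmul (gm g) M) xs M = mmul (foldr (\<lambda>g M. mmul (gm g) M) xs mid) M"
  by (induction xs) (simp_all add: mmul_assoc)

lemma wm_plus: "wm (u + v) = mmul (wm u) (wm v)"
  by (cases u; cases v) (simp add: wm_def plus_fword_def foldr_mm[of _ "foldr _ _ mid"])

lemma wm_zero: "wm 0 = mid" by (simp add: wm_def zero_fword_def)

definition rho :: "FA \<Rightarrow> M3" where
  "rho x = (\<Sum>w\<in>Poly_Mapping.keys x. msm (Poly_Mapping.lookup x w) (wm w))"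

lemma rho_zero[simp]: "rho 0 = 0" by (simp add: rho_def)
lemma rho_add[simp]: "rho (x + y) = rho x + rho y"
  unfolding rho_def by (rule setsum_keys_plus_distrib) (simp_all add: M3_eq msm_def distrib_right)
lemma rho_single: "rho (Poly_Mapping.single a b) = msm b (wm a)"
  by (simp add: rho_def)
lemma rho_uminus[simp]: "rho (- x) = - rho x"
proof -
  have "rho x + rho (- x) = 0" using rho_add[of x "- x"] by simp
  thus ?thesis by (metis neg_eq_iff_add_eq_0)
qed
lemma rho_diff[simp]: "rho (x - y) = rho x - rho y"
  using rho_add[of x "- y"] by simp

lemma rho_single_mult: "rho (Poly_Mapping.single a b * y) = mmul (msm b (wm a)) (rho y)"
proof (induction y rule: pm_induct)
  case zero then show ?case by (simp add: M3_eq mmul_def)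
next
  case (add f c d)
  have "rho (Poly_Mapping.single a b * (f + Poly_Mapping.single c d)) =
        rho (Poly_Mapping.single a b * f) + msm (b * d) (wm (a + c))"
    by (simp add: distrib_left mult_single rho_single)
  then show ?case using add by (simp add: rho_single wm_plus M3_eq mmul_def msm_def algebra_simps)
qed

lemma rho_mult[simp]: "rho (x * y) = mmul (rho x) (rho y)"
proof (induction x rule: pm_induct)
  case zero then show ?case by (simp add: M3_eq mmul_def)
next
  case (add f a b)
  then show ?case by (simp add: distrib_right rho_single_mult rho_single M3_eq mmul_def msm_def algebra_simps)
qed


lemma rho_sc[simp]: "rho (sc c) = msm c mid" by (simp add: sc_def rho_single wm_zero)
lemma rho_one[simp]: "rho 1 = mid" using rho_sc[of 1] by (simp add: M3_eq msm_def)
lemma rho_num[simp]: "rho (numeral n) = msm (numeral n) mid" using rho_sc[of "numeral n"] by (simp add: sc_numeral)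
lemma rho_gE[simp]: "rho gE = E3" by (simp add: gE_def rho_single wm_def M3_eq msm_def)
lemma rho_gF[simp]: "rho gF = F3" by (simp add: gF_def rho_single wm_def M3_eq msm_def)
lemma rho_gH[simp]: "rho gH = H3" by (simp add: gH_def rho_single wm_def M3_eq msm_def)

lemmas mcomp = M3_eq mmul_def msm_def mid_def E3_def F3_def H3_def fun_diff_def

lemma rho_ideal: "x \<in> sl2_ideal \<Longrightarrow> rho x = 0"
  unfolding sl2_ideal_def
proof (induction x rule: ideal_gen.induct)
  case (gen r)
  have "rho (gH * gE - gE * gH - 2 * gE) = 0" by (simp add: mcomp)
  moreover have "rho (gH * gF - gF * gH + 2 * gF) = 0" by (simp add: mcomp)
  moreover have "rho (gE * gF - gF * gE - gH) = 0" by (simp add: mcomp)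
  ultimately show ?case using gen unfolding sl2_rels_def by blast
next
  case zero then show ?case by simp
next
  case (add x y) then show ?case by simp
next
  case (mult x a b) then show ?case by (simp add: M3_eq mmul_def)
qed


lemma rho_cg: "x \<approx> y \<Longrightarrow> rho x = rho y"
  unfolding cg_def using rho_ideal[of "x - y"] by simp

fun fl :: "idx \<Rightarrow> idx" where "fl I1 = I3" | "fl I2 = I2" | "fl I3 = I1"
definition cj :: "M3 \<Rightarrow> M3" where "cj M = (\<lambda>i j. M (fl i) (fl j))"

lemma cj_mmul[simp]: "cj (mmul A B) = mmul (cj A) (cj B)" by (simp add: cj_def M3_eq mmul_def algebra_simps)
lemma cj_msm_mid[simp]: "cj (msm c mid) = msm c mid" by (simp add: cj_def M3_eq msm_def mid_def)

lemma rho_sub: "s \<in> subalg_gen {sharpA, sharpB, sharpC, sharpD} \<Longrightarrow> cj (rho s) = rho s"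
proof (induction s rule: subalg_gen.induct)
  case (gen s)
  have "cj (rho sharpA) = rho sharpA" by (simp add: sharpA_def cj_def mcomp)
  moreover have "cj (rho sharpB) = rho sharpB" by (simp add: sharpB_def cj_def mcomp)
  moreover have "cj (rho sharpC) = rho sharpC" by (simp add: sharpC_def cj_def mcomp)
  moreover have "cj (rho sharpD) = rho sharpD" by (simp add: sharpD_def cj_def mcomp power2_eq_square)
  ultimately show ?case using gen by blast
next
  case (scal c) then show ?case by simp
next
  case (add x y)
  have "cj (rho (x + y)) = cj (rho x) + cj (rho y)" by (simp add: cj_def M3_eq)
  then show ?case using add.IH rho_add by metis
next
  case (mult x y) then show ?case by simp
qed


theorem theorem7p8:
  shows "Im_sharp \<subseteq> U_even \<and> Im_sharp \<noteq> U_even \<and> Im_sharp \<noteq> U_scalars"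
proof (intro conjI)
  show "Im_sharp \<subseteq> U_even" by (rule part1)
  show "Im_sharp \<noteq> U_even"
  proof
    assume eq: "Im_sharp = U_even"
    have "sc 1 * gE ^ 2 * gF ^ 0 * gH ^ 0 + 0 \<in> grade_lift (2 * 1)"
      by (rule grade_lift.mono) (simp_all add: grade_lift.zero)
    then have "gE ^ 2 \<in> grade_lift (2 * 1)" by simp
    then have "gE ^ 2 + 0 \<in> even_lift" by (rule even_lift.add[OF _ even_lift.zero])
    then have "cls (gE ^ 2) \<in> U_even" unfolding U_even_def by simp
    then have "cls (gE ^ 2) \<in> Im_sharp" using eq by simp
    then obtain s where s: "s \<in> subalg_gen {sharpA, sharpB, sharpC, sharpD}" "cls (gE ^ 2) = cls s"
      unfolding Im_sharp_def by blast
    have "rho (gE ^ 2) = rho s" using cls_eqD[OF s(2)] by (rule rho_cg)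
    then have "cj (rho (gE ^ 2)) = rho (gE ^ 2)" using rho_sub[OF s(1)] by simp
    then have "cj (rho (gE ^ 2)) I1 I3 = rho (gE ^ 2) I1 I3" by simp
    then show False by (simp add: cj_def mcomp power2_eq_square)
  qed
  show "Im_sharp \<noteq> U_scalars"
  proof
    assume eq: "Im_sharp = U_scalars"
    have "sharpB \<in> subalg_gen {sharpA, sharpB, sharpC, sharpD}" by (rule subalg_gen.gen) simp
    then have "cls sharpB \<in> Im_sharp" unfolding Im_sharp_def by simp
    then have "cls sharpB \<in> U_scalars" using eq by simp
    then obtain c where "cls sharpB = cls (sc c)" unfolding U_scalars_def by blast
    then have r: "rho sharpB = msm c mid" using rho_cg[OF cls_eqD] by simp
    have "rho sharpB I1 I1 = msm c mid I1 I1" using r by simp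
    moreover have "rho sharpB I2 I2 = msm c mid I2 I2" using r by simp
    ultimately show False by (simp add: sharpB_def mcomp)
  qed
qed

end
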